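(* Let $S$ be a positive integer and let $v\in\mathbb{R}^n$ be a vector with at least $S$ magnitudes. Let $p=(p_1,\dots,p_n)\in[1/3,2/3]^n$ and let $w=(w_1,\dots,w_n)\in\{\pm1\}^n$ be a random vector with independent entries, where $\Pr[w_i=1]=p_i$ and $\Pr[w_i=-1]=1-p_i$ for each $i\in[n]$. Then for every $\alpha\in\mathbb{R}$, \[\Pr\big[\langle v,w\rangle=\alpha\big]\le\left(\tfrac{2}{3}\right)^{\lceil S/2\rceil}.\]
   Context: A non-zero real number $x$ has magnitude $j\in\mathbb{Z}$ if $10^j\le|x|<10^{j+1}$. A vector $v$ has at least $S$ magnitudes if there exist $S$ non-zero entries of $v$ with pairwise distinct magnitudes. *)

theory Defs
  imports "HOL-Probability.Probability"
begin

definition has_magnitude :: "real \<Rightarrow> int \<Rightarrow> bool" where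
  "has_magnitude x j \<longleftrightarrow> x \<noteq> 0 \<and> (10::real) powi j \<le> \<bar>x\<bar> \<and> \<bar>x\<bar> < (10::real) powi (j + 1)"

definition at_least_magnitudes :: "nat \<Rightarrow> (nat \<Rightarrow> real) \<Rightarrow> nat \<Rightarrow> bool" where
  "at_least_magnitudes n v S \<longleftrightarrow>
     (\<exists>I m. I \<subseteq> {..<n} \<and> card I = S \<and> (\<forall>i\<in>I. v i \<noteq> 0 \<and> has_magnitude (v i) (m i))
            \<and> inj_on m I)"

text \<open>Distribution of a random sign vector w in {+1,-1}^n with independent entries,
  P[w i = 1] = p i, P[w i = -1] = 1 - p i (entries outside {..<n} are fixed to 0).\<close>
definition sign_vector_pmf :: "nat \<Rightarrow> (nat \<Rightarrow> real) \<Rightarrow> (nat \<Rightarrow> real) pmf" where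
  "sign_vector_pmf n p =
     Pi_pmf {..<n} 0 (\<lambda>i. map_pmf (\<lambda>b. if b then 1 else -1) (bernoulli_pmf (p i)))"

end

theory Submission
  imports Defs
begin

lemma prob_bind_fin:
  assumes "finite A" "set_pmf Q \<subseteq> A"
  shows "measure_pmf.prob (bind_pmf Q N) E = (\<Sum>y\<in>A. pmf Q y * measure_pmf.prob (N y) E)"
proof -
  have "emeasure (measure_pmf (bind_pmf Q N)) E = (\<Sum>y\<in>A. emeasure (measure_pmf (N y)) E * pmf Q y)"
    unfolding emeasure_bind_pmf
    by (rule nn_integral_measure_pmf_support) (use assms in \<open>auto simp: set_pmf_eq\<close>)
  also have "\<dots> = ennreal (\<Sum>y\<in>A. pmf Q y * measure_pmf.prob (N y) E)"
    by (simp add: measure_pmf.emeasure_eq_measure sum_ennreal[symmetric] ennreal_mult' mult.commute)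
  finally show ?thesis
    by (simp add: measure_pmf.emeasure_eq_measure sum_nonneg)
qed

lemma key:
  fixes q :: "nat \<Rightarrow> real pmf" and c :: real and E :: "(nat \<Rightarrow> real) set"
  assumes "finite J"
  shows "finite A \<Longrightarrow> J \<subseteq> A \<Longrightarrow>
    (\<forall>i\<in>A. set_pmf (q i) \<subseteq> {1,-1} \<and> pmf (q i) 1 \<le> c \<and> pmf (q i) (-1) \<le> c) \<Longrightarrow> 0 \<le> c \<Longrightarrow>
    (\<forall>f f'. f\<in>E \<longrightarrow> f'\<in>E \<longrightarrow> (\<forall>i. i\<notin>J \<longrightarrow> f i = f' i) \<longrightarrow> (\<forall>i\<in>J. f i = f' i)) \<Longrightarrow>
    measure_pmf.prob (Pi_pmf A d q) E \<le> c ^ card J"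
  using assms
proof (induction J arbitrary: A E rule: finite_induct)
  case empty
  then show ?case by (simp add: measure_pmf.prob_le_1)
next
  case (insert x J)
  define A' where "A' = A - {x}"
  have A: "A = insert x A'" "x \<notin> A'" "finite A'" using insert.prems unfolding A'_def by auto
  define E1 where "E1 = {f. f(x:=1) \<in> E}"
  define E2 where "E2 = {f. f(x:=-1) \<in> E}"
  have qx: "set_pmf (q x) \<subseteq> {1,-1}" "pmf (q x) 1 \<le> c" "pmf (q x) (-1) \<le> c"
    using insert.prems by auto
  have "measure_pmf.prob (Pi_pmf A d q) E =
     measure_pmf.prob (q x \<bind> (\<lambda>y. Pi_pmf A' d q \<bind> (\<lambda>f. return_pmf (f(x := y))))) E"
    using A by (simp add: Pi_pmf_insert')
  also have "\<dots> = (\<Sum>y\<in>{1,-1}. pmf (q x) y * measure_pmf.prob (Pi_pmf A' d q \<bind> (\<lambda>f. return_pmf (f(x := y)))) E)"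
    by (rule prob_bind_fin) (use qx in auto)
  also have "\<dots> = pmf (q x) 1 * measure_pmf.prob (Pi_pmf A' d q) E1 + pmf (q x) (-1) * measure_pmf.prob (Pi_pmf A' d q) E2"
    by (simp add: map_pmf_def[symmetric] E1_def E2_def vimage_def)
  also have "\<dots> \<le> c * measure_pmf.prob (Pi_pmf A' d q) E1 + c * measure_pmf.prob (Pi_pmf A' d q) E2"
    by (intro add_mono mult_right_mono qx) auto
  also have "\<dots> = c * measure_pmf.prob (Pi_pmf A' d q) (E1 \<union> E2)"
  proof -
    have "E1 \<inter> E2 = {}"
    proof (rule ccontr)
      assume "E1 \<inter> E2 \<noteq> {}"
      then obtain f where f: "f(x:=1) \<in> E" "f(x:=-1) \<in> E" unfolding E1_def E2_def by auto
      have "\<forall>i. i \<notin> insert x J \<longrightarrow> (f(x:=1)) i = (f(x:=-1)) i" by simp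
      then have "\<forall>i\<in>insert x J. (f(x:=1)) i = (f(x:=-1)) i"
        using insert.prems(5) f by blast
      then have "(f(x:=1)) x = (f(x:=-1)) x" by blast
      then show False by simp
    qed
    then show ?thesis
      by (simp add: measure_pmf.finite_measure_Union distrib_left)
  qed
  also have "\<dots> \<le> c * c ^ card J"
  proof (intro mult_left_mono insert.IH)
    show "\<forall>f f'. f \<in> E1 \<union> E2 \<longrightarrow> f' \<in> E1 \<union> E2 \<longrightarrow> (\<forall>i. i \<notin> J \<longrightarrow> f i = f' i) \<longrightarrow> (\<forall>i\<in>J. f i = f' i)"
    proof (intro allI impI)
      fix f f' assume f: "f \<in> E1 \<union> E2" "f' \<in> E1 \<union> E2" and ag: "\<forall>i. i \<notin> J \<longrightarrow> f i = f' i"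
      obtain y where y: "f(x:=y) \<in> E" using f unfolding E1_def E2_def by auto
      obtain y' where y': "f'(x:=y') \<in> E" using f unfolding E1_def E2_def by auto
      have "\<forall>i. i \<notin> insert x J \<longrightarrow> (f(x:=y)) i = (f'(x:=y')) i" using ag by auto
      then have "\<forall>i\<in>insert x J. (f(x:=y)) i = (f'(x:=y')) i" using insert.prems(5) y y' by blast
      then show "\<forall>i\<in>J. f i = f' i" using insert.hyps(2) by (auto split: if_splits)
    qed
  qed (use insert.prems insert.hyps A in auto)
  also have "\<dots> = c ^ card (insert x J)" using insert.hyps by simp
  finally show ?case .
qed

lemma sum_bound:
  fixes v :: "nat \<Rightarrow> real" and m :: "nat \<Rightarrow> int"
  assumes "finite K"
  shows "(\<forall>k\<in>K. \<bar>v k\<bar> < 10 powi (m k + 1)) \<Longrightarrow> inj_on m K \<Longrightarrow> (\<forall>k\<in>K. m k \<le> M \<and> m k mod 2 = r)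
     \<Longrightarrow> (\<Sum>k\<in>K. \<bar>v k\<bar>) \<le> 2 * 10 powi (M+1)"
  using assms
proof (induction K arbitrary: M rule: finite_ranking_induct[where f=m])
  case empty
  then show ?case by simp
next
  case (insert x S)
  show ?case
  proof (cases "x \<in> S")
    case True
    then show ?thesis using insert by (simp add: insert_absorb)
  next
    case False
    define t :: real where "t = 10 powi (m x - 1)"
    have tpos: "t > 0" unfolding t_def by simp
    have t1: "10 powi (m x + 1) = 100 * (t::real)"
    proof -
      have "(10::real) powi (m x + 1) = 10 powi (m x - 1 + 2)" by (rule arg_cong[where f="\<lambda>k. 10 powi k"]) simp
      also have "\<dots> = 10 powi (m x - 1) * 10 powi 2" by (rule power_int_add) simp
      finally show ?thesis unfolding t_def by simp
    qed
    have t2: "10 powi (m x - 2 + 1) = (t::real)" unfolding t_def by (simp add: algebra_simps)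
    have IH: "(\<Sum>k\<in>S. \<bar>v k\<bar>) \<le> 2 * t"
    proof -
      have "\<forall>k\<in>S. m k \<le> m x - 2 \<and> m k mod 2 = r"
      proof
        fix k assume k: "k \<in> S"
        have "m k \<le> m x" using insert.hyps(2) k by blast
        moreover have "m k \<noteq> m x" using insert.prems(2) k False
          by (metis inj_on_contraD insertCI)
        moreover have "m k mod 2 = r" "m x mod 2 = r" using insert.prems(3) k by auto
        ultimately show "m k \<le> m x - 2 \<and> m k mod 2 = r" by presburger
      qed
      moreover have "inj_on m S" using insert.prems(2) by (auto intro: inj_on_subset)
      moreover have "\<forall>k\<in>S. \<bar>v k\<bar> < 10 powi (m k + 1)" using insert.prems(1) by auto
      ultimately have "(\<Sum>k\<in>S. \<bar>v k\<bar>) \<le> 2 * 10 powi (m x - 2 + 1)"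
        by (intro insert.IH) auto
      then show ?thesis by (simp only: t2)
    qed
    have "(\<Sum>k\<in>insert x S. \<bar>v k\<bar>) = \<bar>v x\<bar> + (\<Sum>k\<in>S. \<bar>v k\<bar>)"
      using False insert.hyps(1) by simp
    also have "\<dots> \<le> 100 * t + 2 * t" using IH insert.prems(1) t1 by force
    also have "\<dots> \<le> 2 * (100 * t)" using tpos by simp
    also have "100 * t = 10 powi (m x + 1)" using t1 by simp
    also have "\<dots> \<le> 10 powi (M + 1)"
      by (rule power_int_increasing) (use insert.prems(3) in auto)
    finally show ?thesis by simp
  qed
qed

lemma pmf_sign:
  assumes "0 \<le> a" "a \<le> 1"
  shows "pmf (map_pmf (\<lambda>b. if b then 1 else -1) (bernoulli_pmf a)) (1::real) = a"
    "pmf (map_pmf (\<lambda>b. if b then 1 else -1) (bernoulli_pmf a)) (-1::real) = 1 - a"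
proof -
  have "(\<lambda>b. if b then 1 else -1::real) -` {1} = {True}" by (auto split: if_splits)
  then show "pmf (map_pmf (\<lambda>b. if b then 1 else -1) (bernoulli_pmf a)) (1::real) = a"
    using assms by (simp add: pmf_map measure_pmf_single)
  have "(\<lambda>b. if b then 1 else -1::real) -` {-1} = {False}" by (auto split: if_splits)
  then show "pmf (map_pmf (\<lambda>b. if b then 1 else -1) (bernoulli_pmf a)) (-1::real) = 1 - a"
    using assms by (simp add: pmf_map measure_pmf_single)
qed

theorem mainTheorem3:
  fixes n S :: nat and v p :: "nat \<Rightarrow> real" and \<alpha> :: real
  assumes "S > 0"
    and "at_least_magnitudes n v S"
    and "\<And>i. i < n \<Longrightarrow> p i \<in> {1/3..2/3}"
  shows "measure_pmf.prob (sign_vector_pmf n p) {w. (\<Sum>i<n. v i * w i) = \<alpha>}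
           \<le> (2/3::real) ^ nat \<lceil>real S / 2\<rceil>"
proof -
  obtain I m where I: "I \<subseteq> {..<n}" "card I = S" "\<forall>i\<in>I. v i \<noteq> 0 \<and> has_magnitude (v i) (m i)"
    "inj_on m I"
    using assms(2) unfolding at_least_magnitudes_def by blast
  have finI: "finite I" using I(1) finite_subset by blast
  obtain r where r: "S \<le> 2 * card {i\<in>I. m i mod 2 = r}"
  proof -
    have "card I = card {i\<in>I. m i mod 2 = 0} + card {i\<in>I. m i mod 2 = 1}"
    proof -
      have "I = {i\<in>I. m i mod 2 = 0} \<union> {i\<in>I. m i mod 2 = 1}" by auto
      then have "card I = card ({i\<in>I. m i mod 2 = 0} \<union> {i\<in>I. m i mod 2 = 1})" by simp
      also have "\<dots> = card {i\<in>I. m i mod 2 = 0} + card {i\<in>I. m i mod 2 = 1}"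
        by (rule card_Un_disjoint) (use finI in auto)
      finally show ?thesis .
    qed
    then have "S \<le> 2 * card {i\<in>I. m i mod 2 = 0} \<or> S \<le> 2 * card {i\<in>I. m i mod 2 = 1}"
      using I(2) by linarith
    then show ?thesis using that by blast
  qed
  define J where "J = {i\<in>I. m i mod 2 = r}"
  have JI: "J \<subseteq> I" unfolding J_def by auto
  have finJ: "finite J" using JI finI finite_subset by blast
  have mag: "\<And>i. i \<in> I \<Longrightarrow> 10 powi m i \<le> \<bar>v i\<bar> \<and> \<bar>v i\<bar> < 10 powi (m i + 1)"
    using I(3) unfolding has_magnitude_def by blast
  define q where "q = (\<lambda>i. map_pmf (\<lambda>b. if b then 1 else -1::real) (bernoulli_pmf (p i)))"
  define E where "E = {w. (\<Sum>i<n. v i * w i) = \<alpha> \<and> (\<forall>j\<in>J. w j = 1 \<or> w j = -1)}"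
  have setq: "\<And>i. set_pmf (q i) \<subseteq> {1,-1}" unfolding q_def by auto
  have "measure_pmf.prob (sign_vector_pmf n p) {w. (\<Sum>i<n. v i * w i) = \<alpha>}
      = measure_pmf.prob (Pi_pmf {..<n} 0 q) ({w. (\<Sum>i<n. v i * w i) = \<alpha>} \<inter> set_pmf (Pi_pmf {..<n} 0 q))"
    unfolding sign_vector_pmf_def q_def by (simp add: measure_Int_set_pmf)
  also have "\<dots> \<le> measure_pmf.prob (Pi_pmf {..<n} 0 q) E"
  proof (rule measure_pmf.finite_measure_mono)
    show "{w. (\<Sum>i<n. v i * w i) = \<alpha>} \<inter> set_pmf (Pi_pmf {..<n} 0 q) \<subseteq> E"
    proof
      fix w assume w: "w \<in> {w. (\<Sum>i<n. v i * w i) = \<alpha>} \<inter> set_pmf (Pi_pmf {..<n} 0 q)"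
      have "\<forall>j\<in>J. w j = 1 \<or> w j = -1"
      proof
        fix j assume "j \<in> J"
        then have "j < n" using JI I(1) by auto
        then have "w j \<in> set_pmf (q j)" using w by (auto simp: set_Pi_pmf PiE_dflt_def)
        then show "w j = 1 \<or> w j = -1" using setq by blast
      qed
      then show "w \<in> E" using w unfolding E_def by auto
    qed
  qed simp
  also have "\<dots> \<le> (2/3) ^ card J"
  proof (rule key[OF finJ])
    show "J \<subseteq> {..<n}" using JI I(1) by auto
    show "\<forall>i\<in>{..<n}. set_pmf (q i) \<subseteq> {1, - 1} \<and> pmf (q i) 1 \<le> 2/3 \<and> pmf (q i) (- 1) \<le> 2/3"
    proof
      fix i assume "i \<in> {..<n}"
      then have "1/3 \<le> p i" "p i \<le> 2/3" using assms(3) by auto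
      then show "set_pmf (q i) \<subseteq> {1, - 1} \<and> pmf (q i) 1 \<le> 2/3 \<and> pmf (q i) (- 1) \<le> 2/3"
        using setq[of i] pmf_sign[of "p i"] unfolding q_def by auto
    qed
    show "\<forall>f f'. f \<in> E \<longrightarrow> f' \<in> E \<longrightarrow> (\<forall>i. i \<notin> J \<longrightarrow> f i = f' i) \<longrightarrow> (\<forall>i\<in>J. f i = f' i)"
    proof (intro allI impI)
      fix f f' assume f: "f \<in> E" and f': "f' \<in> E" and ag: "\<forall>i. i \<notin> J \<longrightarrow> f i = f' i"
      show "\<forall>i\<in>J. f i = f' i"
      proof (rule ccontr)
        assume "\<not> (\<forall>i\<in>J. f i = f' i)"
        define D where "D = {j\<in>J. f j \<noteq> f' j}"
        have Dne: "D \<noteq> {}" using \<open>\<not> (\<forall>i\<in>J. f i = f' i)\<close> unfolding D_def by auto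
        have finD: "finite D" using finJ unfolding D_def by auto
        have DJ: "D \<subseteq> J" unfolding D_def by auto
        obtain j0 where j0: "j0 \<in> D" "m j0 = Max (m ` D)"
        proof -
          have "Max (m ` D) \<in> m ` D" using Max_in[of "m ` D"] finD Dne by blast
          then show ?thesis using that by (metis imageE)
        qed
        have j0max: "\<And>k. k \<in> D \<Longrightarrow> m k \<le> m j0" using j0 finD by simp
        define g where "g = (\<lambda>i. v i * (f i - f' i))"
        have "(\<Sum>i<n. g i) = (\<Sum>i<n. v i * f i) - (\<Sum>i<n. v i * f' i)"
          unfolding g_def by (simp add: sum_subtractf right_diff_distrib)
        also have "\<dots> = 0" using f f' unfolding E_def by simp
        finally have s0: "(\<Sum>i<n. g i) = 0" .
        have "(\<Sum>i<n. g i) = (\<Sum>i\<in>D. g i)"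
        proof (rule sum.mono_neutral_right)
          show "D \<subseteq> {..<n}" using DJ JI I(1) by auto
          show "\<forall>i\<in>{..<n} - D. g i = 0" using ag unfolding g_def D_def by auto
        qed simp
        also have "\<dots> = g j0 + (\<Sum>i\<in>D - {j0}. g i)" using j0(1) finD by (simp add: sum.remove)
        finally have s1: "g j0 = - (\<Sum>i\<in>D - {j0}. g i)" using s0 by simp
        have fpm: "\<And>j. j \<in> J \<Longrightarrow> (f j = 1 \<or> f j = -1) \<and> (f' j = 1 \<or> f' j = -1)"
          using f f' unfolding E_def by auto
        have gj0: "\<bar>g j0\<bar> = 2 * \<bar>v j0\<bar>"
        proof -
          have "f j0 \<noteq> f' j0" using j0(1) unfolding D_def by auto
          moreover have "j0 \<in> J" using j0(1) DJ by blast
          then have "(f j0 = 1 \<or> f j0 = -1) \<and> (f' j0 = 1 \<or> f' j0 = -1)" by (rule fpm)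
          ultimately have "\<bar>f j0 - f' j0\<bar> = 2" by auto
          then show ?thesis unfolding g_def by (simp add: abs_mult)
        qed
        have "\<bar>\<Sum>i\<in>D - {j0}. g i\<bar> \<le> (\<Sum>i\<in>D - {j0}. \<bar>g i\<bar>)" by (rule sum_abs)
        also have "\<dots> \<le> (\<Sum>i\<in>D - {j0}. 2 * \<bar>v i\<bar>)"
        proof (rule sum_mono)
          fix i assume "i \<in> D - {j0}"
          then have "i \<in> J" using DJ by blast
          then have "(f i = 1 \<or> f i = -1) \<and> (f' i = 1 \<or> f' i = -1)" by (rule fpm)
          then have "\<bar>f i - f' i\<bar> \<le> 2" by auto
          then show "\<bar>g i\<bar> \<le> 2 * \<bar>v i\<bar>" unfolding g_def
            by (simp add: abs_mult mult.commute mult_left_mono)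
        qed
        also have "\<dots> = 2 * (\<Sum>i\<in>D - {j0}. \<bar>v i\<bar>)" by (simp add: sum_distrib_left)
        also have "(\<Sum>i\<in>D - {j0}. \<bar>v i\<bar>) \<le> 2 * 10 powi (m j0 - 2 + 1)"
        proof (rule sum_bound)
          show "finite (D - {j0})" using finD by simp
          show "\<forall>k\<in>D - {j0}. \<bar>v k\<bar> < 10 powi (m k + 1)" using mag DJ JI by blast
          show "inj_on m (D - {j0})" using I(4) DJ JI by (auto intro: inj_on_subset)
          show "\<forall>k\<in>D - {j0}. m k \<le> m j0 - 2 \<and> m k mod 2 = r"
          proof
            fix k assume k: "k \<in> D - {j0}"
            have "m k \<le> m j0" using j0max k by blast
            moreover have "m k \<noteq> m j0" using I(4) k j0(1) DJ JI
              by (metis DiffE inj_on_contraD singletonI subset_iff)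
            moreover have "m k mod 2 = r" "m j0 mod 2 = r" using k j0(1) DJ unfolding J_def by auto
            ultimately show "m k \<le> m j0 - 2 \<and> m k mod 2 = r" by presburger
          qed
        qed
        finally have ineq: "2 * \<bar>v j0\<bar> \<le> 2 * (2 * 10 powi (m j0 - 2 + 1))"
          using s1 gj0 by simp
        define u where "u = (10::real) powi (m j0 - 2 + 1)"
        have upos: "0 < u" unfolding u_def by simp
        have "(10::real) powi m j0 = 10 powi (m j0 - 2 + 1) * 10 powi 1"
          by (subst power_int_add[symmetric]) simp_all
        then have u10: "(10::real) powi m j0 = u * 10" unfolding u_def by simp
        have "10 powi m j0 \<le> \<bar>v j0\<bar>" using mag j0(1) DJ JI by blast
        then show False using ineq[folded u_def] u10 upos by linarith
      qed
    qed
  qed simp_all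
  also have "\<dots> \<le> (2/3) ^ nat \<lceil>real S / 2\<rceil>"
  proof (rule power_decreasing)
    have "real S / 2 \<le> real (card J)" using r unfolding J_def by simp
    then have "\<lceil>real S / 2\<rceil> \<le> int (card J)" by (simp add: ceiling_le_iff)
    then show "nat \<lceil>real S / 2\<rceil> \<le> card J" using nat_le_iff by blast
  qed simp_all
  finally show ?thesis .
qed
end
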